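(* For every even $n\ge 6$ there exist Boolean bent functions $f,f'\colon\mathbb F_2^n\to\mathbb F_2$ that are not extended-affine equivalent but whose translation designs $\operatorname{dev}(G_f)$ and $\operatorname{dev}(G_{f'})$ are isomorphic. (Hence, for Boolean bent functions, isomorphism of the designs $\operatorname{dev}(G_f)$ is a strictly coarser equivalence relation than EA-equivalence for every even $n\ge6$.)
   Context: A Boolean function $f\colon\mathbb F_2^n\to\mathbb F_2$ ($n$ even) is bent if $\sum_{\mathbf x}(-1)^{f(\mathbf x)\oplus\langle\mathbf a,\mathbf x\rangle}=\pm2^{n/2}$ for all $\mathbf a\in\mathbb F_2^n$. Boolean functions $f,f'$ are EA-equivalent if $f=f'\circ A_2\oplus A_3$ for an affine permutation $A_2$ of $\mathbb F_2^n$ and an affine function $A_3\colon\mathbb F_2^n\to\mathbb F_2$. $G_f=\{(\mathbf x,f(\mathbf x))\}\subseteq\mathbb F_2^n\times\mathbb F_2$ is the graph of $f$; $\operatorname{dev}(A)$ denotes the incidence structure with point set the ambient group and blocks all translates $A+g$. Two incidence structures with incidence matrices $M,M'$ are isomorphic if $M=PM'Q$ for permutation matrices $P,Q$. *)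

theory Defs
  imports Main
begin

text \<open>Vectors of F_2^n are represented as bool lists of length n (True = 1).\<close>

definition vecs :: "nat \<Rightarrow> bool list set" where
  "vecs n = {x. length x = n}"

definition vadd :: "bool list \<Rightarrow> bool list \<Rightarrow> bool list" where
  "vadd x y = map2 (\<lambda>a b. a \<noteq> b) x y"

definition ip :: "bool list \<Rightarrow> bool list \<Rightarrow> bool" where
  "ip x y = odd (length (filter id (map2 (\<and>) x y)))"

definition sgn2 :: "bool \<Rightarrow> int" where
  "sgn2 b = (if b then -1 else 1)"

definition bent :: "nat \<Rightarrow> (bool list \<Rightarrow> bool) \<Rightarrow> bool" where
  "bent n f \<longleftrightarrow> (\<forall>a\<in>vecs n.
     (\<Sum>x\<in>vecs n. sgn2 (f x \<noteq> ip a x)) = 2 ^ (n div 2) \<or>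
     (\<Sum>x\<in>vecs n. sgn2 (f x \<noteq> ip a x)) = - (2 ^ (n div 2)))"

definition linear_map :: "nat \<Rightarrow> (bool list \<Rightarrow> bool list) \<Rightarrow> bool" where
  "linear_map n L \<longleftrightarrow> (\<forall>x\<in>vecs n. L x \<in> vecs n) \<and>
     (\<forall>x\<in>vecs n. \<forall>y\<in>vecs n. L (vadd x y) = vadd (L x) (L y))"

definition affine_perm :: "nat \<Rightarrow> (bool list \<Rightarrow> bool list) \<Rightarrow> bool" where
  "affine_perm n A \<longleftrightarrow> bij_betw A (vecs n) (vecs n) \<and>
     (\<exists>L b. linear_map n L \<and> b \<in> vecs n \<and> (\<forall>x\<in>vecs n. A x = vadd (L x) b))"

definition affine_fun :: "nat \<Rightarrow> (bool list \<Rightarrow> bool) \<Rightarrow> bool" where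
  "affine_fun n g \<longleftrightarrow> (\<exists>a\<in>vecs n. \<exists>c. \<forall>x\<in>vecs n. g x = (ip a x \<noteq> c))"

definition EA_equiv :: "nat \<Rightarrow> (bool list \<Rightarrow> bool) \<Rightarrow> (bool list \<Rightarrow> bool) \<Rightarrow> bool" where
  "EA_equiv n f f' \<longleftrightarrow> (\<exists>A2 A3. affine_perm n A2 \<and> affine_fun n A3 \<and>
     (\<forall>x\<in>vecs n. f x = (f' (A2 x) \<noteq> A3 x)))"

definition graph :: "nat \<Rightarrow> (bool list \<Rightarrow> bool) \<Rightarrow> bool list set" where
  "graph n f = {x @ [f x] | x. x \<in> vecs n}"

definition dev_points :: "nat \<Rightarrow> bool list set" where
  "dev_points m = vecs m"

definition dev_blocks :: "nat \<Rightarrow> bool list set \<Rightarrow> bool list set set" where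
  "dev_blocks m A = {(\<lambda>a. vadd a g) ` A | g. g \<in> vecs m}"

text \<open>Isomorphism of incidence structures (points, blocks, membership incidence):
  M = P M' Q for permutation matrices P, Q.\<close>
definition inc_iso :: "'p set \<Rightarrow> 'p set set \<Rightarrow> 'p set \<Rightarrow> 'p set set \<Rightarrow> bool" where
  "inc_iso P B P' B' \<longleftrightarrow> (\<exists>\<phi> \<psi>. bij_betw \<phi> P P' \<and> bij_betw \<psi> B B' \<and>
     (\<forall>p\<in>P. \<forall>b\<in>B. p \<in> b \<longleftrightarrow> \<phi> p \<in> \<psi> b))"

end

theory Submission
  imports Defs
begin


lemma vecs_iff[simp]: "x \<in> vecs n \<longleftrightarrow> length x = n" by (simp add: vecs_def)

lemma finite_vecs[simp]: "finite (vecs n)"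
proof -
  have "vecs n = {xs. set xs \<subseteq> UNIV \<and> length xs = n}" by (auto simp: vecs_def)
  thus ?thesis using finite_lists_length_eq[of "UNIV::bool set" n] by simp
qed

lemma vadd_Nil[simp]: "vadd [] y = []" "vadd x [] = []" by (auto simp: vadd_def)
lemma vadd_Cons[simp]: "vadd (a#x) (b#y) = (a \<noteq> b) # vadd x y" by (simp add: vadd_def)
lemma length_vadd[simp]: "length (vadd x y) = min (length x) (length y)" by (simp add: vadd_def)

lemma vadd_append: "length x1 = length y1 \<Longrightarrow> vadd (x1@x2) (y1@y2) = vadd x1 y1 @ vadd x2 y2"
  by (simp add: vadd_def)

lemma vadd_comm: "vadd x y = vadd y x"
proof (induction x arbitrary: y)
  case Nil then show ?case by simp
next
  case (Cons a x) then show ?case by (cases y) auto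
qed



lemma vadd_assoc: "vadd (vadd x y) z = vadd x (vadd y z)"
proof (induction x arbitrary: y z)
  case Nil then show ?case by simp
next
  case (Cons a x) then show ?case by (cases y; cases z) auto
qed

lemma vadd_self: "vadd x x = replicate (length x) False"
  by (induction x) auto

lemma vadd_zero[simp]: "vadd x (replicate (length x) False) = x"
  by (induction x) auto

lemma vadd_zero'[simp]: "vadd (replicate (length x) False) x = x"
  using vadd_zero vadd_comm by metis

lemma vadd_zero_len: "length y = length x \<Longrightarrow> vadd x (replicate (length y) False) = x"
  by simp

lemma vadd_cancel: "length x = length y \<Longrightarrow> vadd (vadd x y) y = x"
  by (simp add: vadd_assoc vadd_self vadd_zero_len)

lemma ip_Nil[simp]: "ip [] y = False" "ip x [] = False" by (auto simp: ip_def)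
lemma ip_Cons[simp]: "ip (a#x) (b#y) = ((a \<and> b) \<noteq> ip x y)" by (auto simp: ip_def)

lemma ip_append: "length x1 = length y1 \<Longrightarrow> ip (x1@x2) (y1@y2) = (ip x1 y1 \<noteq> ip x2 y2)"
  by (simp add: ip_def)

lemma ip_comm: "ip x y = ip y x"
proof (induction x arbitrary: y)
  case Nil then show ?case by simp
next
  case (Cons a x) then show ?case by (cases y) auto
qed

lemma ip_vadd_left: "length x = length y \<Longrightarrow> ip (vadd x y) z = (ip x z \<noteq> ip y z)"
proof (induction x arbitrary: y z)
  case Nil then show ?case by simp
next
  case (Cons a x) then show ?case by (cases y; cases z) auto
qed

lemma ip_vadd_right: "length x = length y \<Longrightarrow> ip z (vadd x y) = (ip z x \<noteq> ip z y)"
  using ip_vadd_left ip_comm by metis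

lemma ip_zero[simp]: "ip x (replicate k False) = False"
proof (induction x arbitrary: k)
  case Nil then show ?case by simp
next
  case (Cons a x) then show ?case by (cases k) auto
qed

lemma take_vadd: "take k (vadd x y) = vadd (take k x) (take k y)"
  by (simp add: vadd_def take_map take_zip)
lemma drop_vadd: "drop k (vadd x y) = vadd (drop k x) (drop k y)"
  by (simp add: vadd_def drop_map drop_zip)

lemma sgn2_xor: "sgn2 (a \<noteq> b) = sgn2 a * sgn2 b" by (simp add: sgn2_def)

lemma vecs_Suc: "vecs (Suc m) = Cons True ` vecs m \<union> Cons False ` vecs m"
  by (auto simp: vecs_def length_Suc_conv image_iff)

lemma sum_vecs_Suc: "(\<Sum>v\<in>vecs (Suc m). h v) = (\<Sum>y\<in>vecs m. h (True#y)) + (\<Sum>y\<in>vecs m. h (False#y))"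
  unfolding vecs_Suc
  by (subst sum.union_disjoint) (auto simp: sum.reindex)

lemma char_sum: "length c = m \<Longrightarrow>
   (\<Sum>y\<in>vecs m. sgn2 (ip c y)) = (if c = replicate m False then 2^m else 0)"
proof (induction m arbitrary: c)
  case 0 then show ?case by (simp add: sgn2_def vecs_def)
next
  case (Suc m)
  then obtain c0 c' where c: "c = c0 # c'" "length c' = m" by (cases c) auto
  have e: "(\<Sum>y\<in>vecs m. sgn2 (c0 \<noteq> ip c' y)) = sgn2 c0 * (\<Sum>y\<in>vecs m. sgn2 (ip c' y))"
    unfolding sgn2_xor by (simp add: sum_distrib_left)
  have s: "(\<Sum>y\<in>vecs (Suc m). sgn2 (ip c y)) = sgn2 c0 * (\<Sum>y\<in>vecs m. sgn2 (ip c' y)) + (\<Sum>y\<in>vecs m. sgn2 (ip c' y))"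
    unfolding sum_vecs_Suc c(1) using e by simp
  show ?case using Suc.IH[OF c(2)] c unfolding s
    by (cases c0) (auto simp: sgn2_def)
qed

lemma vecs_add: "vecs (a+b) = (\<lambda>(x,y). x@y) ` (vecs a \<times> vecs b)"
proof (rule set_eqI)
  fix v show "v \<in> vecs (a+b) \<longleftrightarrow> v \<in> (\<lambda>(x,y). x@y) ` (vecs a \<times> vecs b)"
  proof
    assume "v \<in> vecs (a+b)"
    then show "v \<in> (\<lambda>(x,y). x@y) ` (vecs a \<times> vecs b)"
      by (intro image_eqI[where x="(take a v, drop a v)"]) auto
  qed auto
qed

lemma sum_vecs_add: "(\<Sum>v\<in>vecs (a+b). h v) = (\<Sum>x\<in>vecs a. \<Sum>y\<in>vecs b. h (x@y))"
proof -
  have "inj_on (\<lambda>(x,y). x@y) (vecs a \<times> vecs b)" by (auto simp: inj_on_def)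
  then show ?thesis unfolding vecs_add
    by (simp add: sum.reindex sum.cartesian_product split_def)
qed



lemma bent_MM: "bent (m+m) (\<lambda>v. ip (take m v) (drop m v) \<noteq> g (take m v))"
  unfolding bent_def
proof
  fix a :: "bool list" assume a: "a \<in> vecs (m+m)"
  define \<alpha> where "\<alpha> = take m a"
  define \<beta> where "\<beta> = drop m a"
  have la: "length \<alpha> = m" "length \<beta> = m" using a by (auto simp: \<alpha>_def \<beta>_def)
  have aeq: "a = \<alpha> @ \<beta>" by (simp add: \<alpha>_def \<beta>_def)
  have inner: "(\<Sum>y\<in>vecs m. sgn2 ((ip (take m (x@y)) (drop m (x@y)) \<noteq> g (take m (x@y))) \<noteq> ip a (x@y)))
      = (if x = \<beta> then sgn2 (g \<beta> \<noteq> ip \<alpha> \<beta>) * 2^m else 0)" if x: "length x = m" for x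
  proof -
    have t: "sgn2 ((ip (take m (x@y)) (drop m (x@y)) \<noteq> g (take m (x@y))) \<noteq> ip a (x@y))
       = sgn2 (g x \<noteq> ip \<alpha> x) * sgn2 (ip (vadd x \<beta>) y)" if y: "length y = m" for y
    proof -
      have "ip a (x@y) = (ip \<alpha> x \<noteq> ip \<beta> y)" unfolding aeq using la x by (simp add: ip_append)
      moreover have "ip (vadd x \<beta>) y = (ip x y \<noteq> ip \<beta> y)" using la x by (simp add: ip_vadd_left)
      ultimately show ?thesis using x by (auto simp: sgn2_def)
    qed
    have "(\<Sum>y\<in>vecs m. sgn2 ((ip (take m (x@y)) (drop m (x@y)) \<noteq> g (take m (x@y))) \<noteq> ip a (x@y)))
       = (\<Sum>y\<in>vecs m. sgn2 (g x \<noteq> ip \<alpha> x) * sgn2 (ip (vadd x \<beta>) y))"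
      by (intro sum.cong refl) (rule t, simp)
    also have "\<dots> = sgn2 (g x \<noteq> ip \<alpha> x) * (if vadd x \<beta> = replicate m False then 2^m else 0)"
      using char_sum[of "vadd x \<beta>" m] x la by (simp add: sum_distrib_left[symmetric])
    also have "(vadd x \<beta> = replicate m False) = (x = \<beta>)"
    proof
      assume "vadd x \<beta> = replicate m False"
      hence "vadd (vadd x \<beta>) \<beta> = vadd (replicate m False) \<beta>" by simp
      thus "x = \<beta>" using vadd_cancel[of x \<beta>] vadd_zero'[of \<beta>] x la by simp
    next
      assume "x = \<beta>" thus "vadd x \<beta> = replicate m False" using vadd_self la by simp
    qed
    finally show ?thesis by simp
  qed
  have "(\<Sum>v\<in>vecs (m+m). sgn2 ((ip (take m v) (drop m v) \<noteq> g (take m v)) \<noteq> ip a v))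
     = (\<Sum>x\<in>vecs m. \<Sum>y\<in>vecs m. sgn2 ((ip (take m (x@y)) (drop m (x@y)) \<noteq> g (take m (x@y))) \<noteq> ip a (x@y)))"
    by (rule sum_vecs_add)
  also have "\<dots> = (\<Sum>x\<in>vecs m. (if x = \<beta> then sgn2 (g \<beta> \<noteq> ip \<alpha> \<beta>) * 2^m else 0))"
    by (intro sum.cong refl) (rule inner, simp)
  also have "\<dots> = sgn2 (g \<beta> \<noteq> ip \<alpha> \<beta>) * 2^m" using la by simp
  finally have S: "(\<Sum>v\<in>vecs (m+m). sgn2 ((ip (take m v) (drop m v) \<noteq> g (take m v)) \<noteq> ip a v)) = sgn2 (g \<beta> \<noteq> ip \<alpha> \<beta>) * 2^m" .
  have "(m+m) div 2 = m" by simp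
  then show "(\<Sum>x\<in>vecs (m + m). sgn2 ((ip (take m x) (drop m x) \<noteq> g (take m x)) \<noteq> ip a x)) = 2 ^ ((m + m) div 2) \<or>
        (\<Sum>x\<in>vecs (m + m). sgn2 ((ip (take m x) (drop m x) \<noteq> g (take m x)) \<noteq> ip a x)) = - (2 ^ ((m + m) div 2))"
    unfolding S by (simp add: sgn2_def)
qed



fun cub :: "bool list \<Rightarrow> bool" where
  "cub (x0#x1#x2#r) = (x0 \<and> x1 \<and> x2)" | "cub _ = False"

fun sv :: "bool list \<Rightarrow> bool list" where
  "sv (x0#x1#x2#r) = (x1 \<and> x2) # (x0 \<and> x2) # (x0 \<and> x1) # replicate (length r) False"
| "sv x = replicate (length x) False"

lemma length_sv[simp]: "length (sv x) = length x"
  by (induction x rule: sv.induct) auto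

lemma key_identity:
  assumes "length x = length a" "length x \<ge> 3"
  shows "ip (vadd x a) (vadd (sv x) (sv a)) = cub (vadd x a)"
proof -
  have ex3: "\<exists>x0 x1 x2 xr. v = x0#x1#x2#xr" if lv: "length v \<ge> 3" for v :: "bool list"
  proof -
    obtain x0 r0 where 0: "v = x0#r0" using lv by (cases v) auto
    obtain x1 r1 where 1: "r0 = x1#r1" using lv 0 by (cases r0) auto
    obtain x2 r2 where 2: "r1 = x2#r2" using lv 0 1 by (cases r1) auto
    show ?thesis using 0 1 2 by blast
  qed
  obtain x0 x1 x2 xr where x: "x = x0#x1#x2#xr"
    using ex3[OF assms(2)] by blast
  obtain a0 a1 a2 ar where a: "a = a0#a1#a2#ar"
    using ex3[of a] assms by (metis (no_types))
  have l: "length xr = length ar" using assms x a by simp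
  have z: "vadd (replicate (length xr) False) (replicate (length ar) False) = replicate (length xr) False"
    using l vadd_self[of "replicate (length ar) False"] by simp
  show ?thesis unfolding x a using z l by auto
qed

definition Qf :: "nat \<Rightarrow> bool list \<Rightarrow> bool" where
  "Qf m v = ip (take m v) (drop m v)"
definition Ff :: "nat \<Rightarrow> bool list \<Rightarrow> bool" where
  "Ff m v = (ip (take m v) (drop m v) \<noteq> cub (take m v))"

lemma bent_Q: "bent (m+m) (Qf m)"
proof -
  have "Qf m = (\<lambda>v. ip (take m v) (drop m v) \<noteq> (\<lambda>_. False) (take m v))"
    by (auto simp: Qf_def)
  thus ?thesis using bent_MM[of m "\<lambda>_. False"] by simp
qed

lemma bent_F: "bent (m+m) (Ff m)"
proof -
  have "Ff m = (\<lambda>v. ip (take m v) (drop m v) \<noteq> cub (take m v))"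
    by (auto simp: Ff_def)
  thus ?thesis using bent_MM[of m cub] by simp
qed

definition sig :: "nat \<Rightarrow> bool list \<Rightarrow> bool list" where
  "sig m p = replicate m False @ sv (take m p) @ [False]"
definition phi :: "nat \<Rightarrow> bool list \<Rightarrow> bool list" where
  "phi m p = vadd p (sig m p)"

lemma phi_decomp:
  assumes "length x = m" "length y = m"
  shows "phi m (x@y@[z]) = x @ vadd y (sv x) @ [z]"
  using assms vadd_zero[of x] by (simp add: phi_def sig_def vadd_append)

lemma decomp:
  assumes "length p = m+m+1"
  obtains x y z where "p = x@y@[z]" "length x = m" "length y = m"
proof -
  have "p = take m p @ take m (drop m p) @ [last p]"
  proof -
    have "p \<noteq> []" using assms by auto
    hence "p = butlast p @ [last p]" by simp
    moreover have "butlast p = take m p @ take m (drop m p)"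
      using assms by (simp add: butlast_conv_take take_add[symmetric])
    ultimately show ?thesis by simp
  qed
  thus ?thesis using that assms by simp
qed

lemma graph_mem:
  assumes "length u = m" "length w = m"
  shows "(u@w@[t] \<in> graph (m+m) f) = (f (u@w) = t)"
proof -
  have "(u@w@[t] \<in> graph (m+m) f) = (\<exists>x. length x = m+m \<and> (u@w)@[t] = x@[f x])"
    by (auto simp: graph_def)
  also have "\<dots> = (f (u@w) = t)" using assms by auto
  finally show ?thesis .
qed

lemma incidence:
  assumes m: "m \<ge> 3" and p: "length p = m+m+1" and h: "length h = m+m+1"
  shows "(vadd p h \<in> graph (m+m) (Ff m)) = (vadd (phi m p) (phi m h) \<in> graph (m+m) (Qf m))"
proof -
  obtain x y z where P: "p = x@y@[z]" "length x = m" "length y = m" using decomp p by blast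
  obtain a b c where H: "h = a@b@[c]" "length a = m" "length b = m" using decomp h by blast
  have l1: "vadd p h = vadd x a @ vadd y b @ [z \<noteq> c]" using P H by (simp add: vadd_append)
  have e: "vadd (vadd y (sv x)) (vadd b (sv a)) = vadd (vadd y b) (vadd (sv x) (sv a))"
  proof -
    have "vadd (vadd y (sv x)) (vadd b (sv a)) = vadd y (vadd (vadd (sv x) b) (sv a))" by (simp add: vadd_assoc)
    also have "vadd (sv x) b = vadd b (sv x)" by (rule vadd_comm)
    finally show ?thesis by (simp add: vadd_assoc)
  qed
  have l2: "vadd (phi m p) (phi m h) = vadd x a @ vadd (vadd y b) (vadd (sv x) (sv a)) @ [z \<noteq> c]"
    using P H by (simp add: phi_decomp vadd_append e)
  have k: "ip (vadd x a) (vadd (sv x) (sv a)) = cub (vadd x a)"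
    using key_identity[of x a] P H m by simp
  have i: "ip (vadd x a) (vadd (vadd y b) (vadd (sv x) (sv a))) = (ip (vadd x a) (vadd y b) \<noteq> ip (vadd x a) (vadd (sv x) (sv a)))"
    using P H by (simp add: ip_vadd_right)
  show ?thesis unfolding l1 l2
    using P H by (simp add: graph_mem Ff_def Qf_def i k)
qed



lemma vadd_swap: "vadd (vadd X Y) Z = vadd (vadd X Z) Y"
  by (simp add: vadd_assoc vadd_comm[of Y Z])

lemma phi_len: "length p = m+m+1 \<Longrightarrow> length (phi m p) = m+m+1"
  by (simp add: phi_def sig_def)

lemma phi_phi: assumes "length p = m+m+1" shows "phi m (phi m p) = p"
proof -
  obtain x y z where P: "p = x@y@[z]" "length x = m" "length y = m" using decomp assms by blast
  show ?thesis using P by (simp add: phi_decomp vadd_cancel)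
qed

lemma translate_char:
  assumes "G \<subseteq> vecs N" "length h = N"
  shows "(\<lambda>a. vadd a h) ` G = {p \<in> vecs N. vadd p h \<in> G}"
proof (rule set_eqI, rule iffI)
  fix p assume "p \<in> (\<lambda>a. vadd a h) ` G"
  then obtain a where a: "a \<in> G" "p = vadd a h" by blast
  have la: "length a = N" using a assms by auto
  show "p \<in> {p \<in> vecs N. vadd p h \<in> G}" using a la assms by (simp add: vadd_cancel)
next
  fix p assume "p \<in> {p \<in> vecs N. vadd p h \<in> G}"
  hence p: "length p = N" "vadd p h \<in> G" by auto
  have "p = vadd (vadd p h) h" using p assms by (simp add: vadd_cancel)
  thus "p \<in> (\<lambda>a. vadd a h) ` G" using p by blast
qed

lemma graph_sub: "graph n f \<subseteq> vecs (n+1)"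
  by (auto simp: graph_def)

lemma blocks_map:
  assumes m: "m \<ge> 3" and h: "length h = m+m+1"
  shows "phi m ` ((\<lambda>a. vadd a h) ` graph (m+m) (Ff m)) = (\<lambda>a. vadd a (phi m h)) ` graph (m+m) (Qf m)"
proof -
  have hh: "length (phi m h) = m+m+1" using phi_len h by blast
  have "phi m ` {p \<in> vecs (m+m+1). vadd p h \<in> graph (m+m) (Ff m)}
        = {q \<in> vecs (m+m+1). vadd q (phi m h) \<in> graph (m+m) (Qf m)}"
  proof (rule set_eqI, rule iffI)
    fix q assume "q \<in> phi m ` {p \<in> vecs (m+m+1). vadd p h \<in> graph (m+m) (Ff m)}"
    then obtain p where p: "length p = m+m+1" "vadd p h \<in> graph (m+m) (Ff m)" "q = phi m p" by auto
    show "q \<in> {q \<in> vecs (m+m+1). vadd q (phi m h) \<in> graph (m+m) (Qf m)}"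
      using p incidence[OF m p(1) h] phi_len by auto
  next
    fix q assume "q \<in> {q \<in> vecs (m+m+1). vadd q (phi m h) \<in> graph (m+m) (Qf m)}"
    hence q: "length q = m+m+1" "vadd q (phi m h) \<in> graph (m+m) (Qf m)" by auto
    have lp: "length (phi m q) = m+m+1" using phi_len q by blast
    have "vadd (phi m q) h \<in> graph (m+m) (Ff m)"
      using incidence[OF m lp h] q phi_phi by simp
    moreover have "q = phi m (phi m q)" using phi_phi q by simp
    ultimately show "q \<in> phi m ` {p \<in> vecs (m+m+1). vadd p h \<in> graph (m+m) (Ff m)}"
      using lp by auto
  qed
  thus ?thesis
    using translate_char[OF graph_sub h] translate_char[OF graph_sub hh] by simp
qed

lemma phi_image_image: "S \<subseteq> vecs (m+m+1) \<Longrightarrow> phi m ` phi m ` S = S"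
proof -
  assume S: "S \<subseteq> vecs (m+m+1)"
  have "phi m ` phi m ` S = (\<lambda>p. phi m (phi m p)) ` S" by (simp add: image_image)
  also have "\<dots> = S" using S phi_phi by (intro image_cong[of S S _ id, simplified]) auto
  finally show ?thesis .
qed

lemma design_iso:
  assumes m: "m \<ge> 3"
  shows "inc_iso (dev_points (m+m+1)) (dev_blocks (m+m+1) (graph (m+m) (Ff m)))
                 (dev_points (m+m+1)) (dev_blocks (m+m+1) (graph (m+m) (Qf m)))"
proof -
  let ?N = "m+m+1"
  have bij: "bij_betw (phi m) (vecs ?N) (vecs ?N)"
    by (rule bij_betw_byWitness[where f'="phi m"]) (auto simp: phi_phi phi_len)
  have blk_sub: "B \<subseteq> vecs ?N" if hB: "B \<in> dev_blocks ?N (graph (m+m) G)" for B G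
  proof -
    obtain g where g: "g \<in> vecs ?N" "B = (\<lambda>a. vadd a g) ` graph (m+m) G"
      using hB by (auto simp: dev_blocks_def)
    show ?thesis unfolding g(2) using translate_char[OF graph_sub, of g] g(1) by auto
  qed
  have img1: "image (phi m) ` dev_blocks ?N (graph (m+m) (Ff m)) \<subseteq> dev_blocks ?N (graph (m+m) (Qf m))"
  proof
    fix B' assume "B' \<in> image (phi m) ` dev_blocks ?N (graph (m+m) (Ff m))"
    then obtain g where g: "length g = ?N" "B' = phi m ` ((\<lambda>a. vadd a g) ` graph (m+m) (Ff m))"
      by (auto simp: dev_blocks_def)
    show "B' \<in> dev_blocks ?N (graph (m+m) (Qf m))"
      unfolding g(2) blocks_map[OF m g(1)] dev_blocks_def using phi_len g(1) by auto
  qed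
  have img2: "image (phi m) ` dev_blocks ?N (graph (m+m) (Qf m)) \<subseteq> dev_blocks ?N (graph (m+m) (Ff m))"
  proof
    fix B' assume "B' \<in> image (phi m) ` dev_blocks ?N (graph (m+m) (Qf m))"
    then obtain g where g: "length g = ?N" "B' = phi m ` ((\<lambda>a. vadd a g) ` graph (m+m) (Qf m))"
      by (auto simp: dev_blocks_def)
    have lg: "length (phi m g) = ?N" using phi_len g by blast
    have e: "(\<lambda>a. vadd a g) ` graph (m+m) (Qf m) = phi m ` ((\<lambda>a. vadd a (phi m g)) ` graph (m+m) (Ff m))"
      using blocks_map[OF m lg] phi_phi[OF g(1)] by simp
    have sub: "(\<lambda>a. vadd a (phi m g)) ` graph (m+m) (Ff m) \<subseteq> vecs ?N"
      using translate_char[OF graph_sub lg] by auto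
    show "B' \<in> dev_blocks ?N (graph (m+m) (Ff m))"
      unfolding g(2) e phi_image_image[OF sub] dev_blocks_def using lg by auto
  qed
  have bijB: "bij_betw (image (phi m)) (dev_blocks ?N (graph (m+m) (Ff m))) (dev_blocks ?N (graph (m+m) (Qf m)))"
  proof (rule bij_betw_byWitness[where f'="image (phi m)"])
    show "\<forall>B\<in>dev_blocks ?N (graph (m+m) (Ff m)). phi m ` phi m ` B = B"
    proof
      fix B assume "B \<in> dev_blocks ?N (graph (m+m) (Ff m))"
      thus "phi m ` phi m ` B = B" by (rule phi_image_image[OF blk_sub])
    qed
    show "\<forall>B\<in>dev_blocks ?N (graph (m+m) (Qf m)). phi m ` phi m ` B = B"
    proof
      fix B assume "B \<in> dev_blocks ?N (graph (m+m) (Qf m))"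
      thus "phi m ` phi m ` B = B" by (rule phi_image_image[OF blk_sub])
    qed
  qed (fact img1 img2)+
  have inj: "inj_on (phi m) (vecs ?N)" using bij bij_betw_def by blast
  have inc: "\<forall>p\<in>vecs ?N. \<forall>b\<in>dev_blocks ?N (graph (m+m) (Ff m)). p \<in> b \<longleftrightarrow> phi m p \<in> phi m ` b"
  proof (intro ballI)
    fix p b assume p: "p \<in> vecs ?N" and b: "b \<in> dev_blocks ?N (graph (m+m) (Ff m))"
    show "p \<in> b \<longleftrightarrow> phi m p \<in> phi m ` b"
      using inj_on_image_mem_iff[OF inj p blk_sub[OF b]] by simp
  qed
  show ?thesis unfolding inc_iso_def dev_points_def
    apply (rule exI[of _ "phi m"], rule exI[of _ "image (phi m)"])
    using bij bijB inc by simp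
qed



lemma Q_second:
  assumes "length P = m+m" "length U = m+m" "length W = m+m"
  shows "(((Qf m P \<noteq> Qf m (vadd P U)) \<noteq> Qf m (vadd P W)) \<noteq> Qf m (vadd (vadd P U) W))
       = (ip (take m U) (drop m W) \<noteq> ip (take m W) (drop m U))"
proof -
  define p where "p = take m P" define p' where "p' = drop m P"
  define u where "u = take m U" define u' where "u' = drop m U"
  define w where "w = take m W" define w' where "w' = drop m W"
  have l: "length p = m" "length p' = m" "length u = m" "length u' = m" "length w = m" "length w' = m"
    using assms by (auto simp: p_def p'_def u_def u'_def w_def w'_def)
  have q1: "Qf m (vadd P U) = (((ip p p' \<noteq> ip p u') \<noteq> ip u p') \<noteq> ip u u')"
    unfolding Qf_def take_vadd drop_vadd p_def[symmetric] p'_def[symmetric] u_def[symmetric] u'_def[symmetric]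
    using l by (simp add: ip_vadd_left ip_vadd_right) argo
  have q2: "Qf m (vadd P W) = (((ip p p' \<noteq> ip p w') \<noteq> ip w p') \<noteq> ip w w')"
    unfolding Qf_def take_vadd drop_vadd p_def[symmetric] p'_def[symmetric] w_def[symmetric] w'_def[symmetric]
    using l by (simp add: ip_vadd_left ip_vadd_right) argo
  have q3: "Qf m (vadd (vadd P U) W) = ((((((((ip p p' \<noteq> ip p u') \<noteq> ip u p') \<noteq> ip u u') \<noteq>
        ip p w') \<noteq> ip u w') \<noteq> ip w p') \<noteq> ip w u') \<noteq> ip w w')"
    unfolding Qf_def take_vadd drop_vadd p_def[symmetric] p'_def[symmetric] u_def[symmetric] u'_def[symmetric]
       w_def[symmetric] w'_def[symmetric]
    using l by (simp add: ip_vadd_left ip_vadd_right) argo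
  have q0: "Qf m P = ip p p'" by (simp add: Qf_def p_def p'_def)
  show ?thesis unfolding q0 q1 q2 q3 u_def[symmetric] u'_def[symmetric] w_def[symmetric] w'_def[symmetric]
    by argo
qed



definition Vv :: "nat \<Rightarrow> bool \<Rightarrow> bool \<Rightarrow> bool \<Rightarrow> bool list" where
  "Vv m b0 b1 b2 = (b0#b1#b2#replicate (m-3) False) @ replicate m False"

lemma Vv_len: "m \<ge> 3 \<Longrightarrow> length (Vv m b0 b1 b2) = m+m"
  by (simp add: Vv_def)

lemma Vv_add: "vadd (Vv m a0 a1 a2) (Vv m b0 b1 b2) = Vv m (a0\<noteq>b0) (a1\<noteq>b1) (a2\<noteq>b2)"
  by (simp add: Vv_def vadd_append vadd_self replicate_add)

lemma Vv_F: assumes "m \<ge> 3" shows "Ff m (Vv m b0 b1 b2) = (b0 \<and> b1 \<and> b2)"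
proof -
  have l: "length (b0#b1#b2#replicate (m-3) False) = m" using assms by simp
  have "take m (Vv m b0 b1 b2) = b0#b1#b2#replicate (m-3) False"
       "drop m (Vv m b0 b1 b2) = replicate m False"
    using l unfolding Vv_def by (metis append_eq_conv_conj)+
  thus ?thesis by (auto simp: Ff_def)
qed

lemma notEA:
  assumes m: "m \<ge> 3"
  shows "\<not> EA_equiv (m+m) (Ff m) (Qf m)"
proof
  assume "EA_equiv (m+m) (Ff m) (Qf m)"
  then obtain A2 A3 where ap: "affine_perm (m+m) A2" and af: "affine_fun (m+m) A3"
    and eq: "\<forall>x\<in>vecs (m+m). Ff m x = (Qf m (A2 x) \<noteq> A3 x)"
    unfolding EA_equiv_def by blast
  from ap obtain L b where lin: "linear_map (m+m) L" and b: "b \<in> vecs (m+m)"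
    and A2: "\<forall>x\<in>vecs (m+m). A2 x = vadd (L x) b"
    unfolding affine_perm_def by blast
  from af obtain a c where a: "a \<in> vecs (m+m)" and A3: "\<forall>x\<in>vecs (m+m). A3 x = (ip a x \<noteq> c)"
    unfolding affine_fun_def by blast
  have Llen: "length (L x) = m+m" if "length x = m+m" for x using lin that by (simp add: linear_map_def)
  have Ladd: "L (vadd x y) = vadd (L x) (L y)" if "length x = m+m" "length y = m+m" for x y
    using lin that by (simp add: linear_map_def)
  define u where "u = Vv m True False False"
  define w where "w = Vv m False True False"
  have lu: "length u = m+m" "length w = m+m" using Vv_len m by (auto simp: u_def w_def)
  define K where "K = (ip (take m (L u)) (drop m (L w)) \<noteq> ip (take m (L w)) (drop m (L u)))"
  have D: "(((Ff m x \<noteq> Ff m (vadd x u)) \<noteq> Ff m (vadd x w)) \<noteq> Ff m (vadd (vadd x u) w)) = K"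
    if x: "length x = m+m" for x
  proof -
    define P where "P = vadd (L x) b"
    have lx: "length (vadd x u) = m+m" "length (vadd x w) = m+m" "length (vadd (vadd x u) w) = m+m"
      using x lu by auto
    have lP: "length P = m+m" using Llen[OF x] b by (simp add: P_def)
    have lLu: "length (L u) = m+m" "length (L w) = m+m" using Llen lu by auto
    have a1: "A2 x = P" using A2 x by (simp add: P_def)
    have a2: "A2 (vadd x u) = vadd P (L u)"
      using A2 lx Ladd[OF x lu(1)] by (simp add: P_def vadd_swap)
    have a3: "A2 (vadd x w) = vadd P (L w)"
      using A2 lx Ladd[OF x lu(2)] by (simp add: P_def vadd_swap)
    have a4: "A2 (vadd (vadd x u) w) = vadd (vadd P (L u)) (L w)"
      using A2 lx Ladd[OF lx(1) lu(2)] Ladd[OF x lu(1)]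
      by (simp add: P_def) (metis vadd_swap)
    have b2: "A3 (vadd x u) = ((ip a x \<noteq> ip a u) \<noteq> c)"
      using A3 lx x lu a by (simp add: ip_vadd_right)
    have b3: "A3 (vadd x w) = ((ip a x \<noteq> ip a w) \<noteq> c)"
      using A3 lx x lu a by (simp add: ip_vadd_right)
    have b4: "A3 (vadd (vadd x u) w) = (((ip a x \<noteq> ip a u) \<noteq> ip a w) \<noteq> c)"
      using A3 lx x lu a by (simp add: ip_vadd_right)
    have b1: "A3 x = (ip a x \<noteq> c)" using A3 x by simp
    have Qs: "(((Qf m P \<noteq> Qf m (vadd P (L u))) \<noteq> Qf m (vadd P (L w))) \<noteq> Qf m (vadd (vadd P (L u)) (L w))) = K"
      unfolding K_def by (rule Q_second[OF lP lLu])
    have e1: "Ff m x = (Qf m (A2 x) \<noteq> A3 x)" using eq x by simp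
    have e2: "Ff m (vadd x u) = (Qf m (A2 (vadd x u)) \<noteq> A3 (vadd x u))" using eq lx by simp
    have e3: "Ff m (vadd x w) = (Qf m (A2 (vadd x w)) \<noteq> A3 (vadd x w))" using eq lx by simp
    have e4: "Ff m (vadd (vadd x u) w) = (Qf m (A2 (vadd (vadd x u) w)) \<noteq> A3 (vadd (vadd x u) w))"
      using eq lx by simp
    show ?thesis unfolding e1 e2 e3 e4 a1 a2 a3 a4 b1 b2 b3 b4 using Qs by argo
  qed
  have "K = False"
    using D[OF Vv_len[OF m, of False False False]] m
    by (simp add: u_def w_def Vv_add Vv_F)
  moreover have "K = True"
    using D[OF Vv_len[OF m, of False False True]] m
    by (simp add: u_def w_def Vv_add Vv_F)
  ultimately show False by simp
qed


theorem theorem2: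
  fixes n :: nat
  assumes "even n" and "n \<ge> 6"
  shows "\<exists>f f'. bent n f \<and> bent n f' \<and> \<not> EA_equiv n f f' \<and>
           inc_iso (dev_points (n+1)) (dev_blocks (n+1) (graph n f))
                   (dev_points (n+1)) (dev_blocks (n+1) (graph n f'))"
proof -
  obtain m where n: "n = m + m" using assms(1) by (metis evenE mult_2)
  have m: "m \<ge> 3" using assms(2) n by simp
  show ?thesis unfolding n
    using bent_F[of m] bent_Q[of m] notEA[OF m] design_iso[OF m] by blast
qed

end
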